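(* Let $\Omega_1,\Omega_2\subset\mathbb R^n$ be open bounded sets and let $F_j,F:\overline{\Omega}_1\to\overline{\Omega}_2$, $j\ge1$, satisfy: (i) $\sup_{j\ge1}\mathrm{Lip}(F_j,\Omega_1)<\infty$; (ii) $F|_{\Omega_1}$ and $F_j|_{\Omega_1}$ are invertible for all $j\ge1$; (iii) $F_j\to F$ pointwise in $\Omega_1$; (iv) $F_j(\partial\Omega_1)\subset\partial\Omega_2$ and $F_j(\Omega_1)=\Omega_2$ for all $j\ge1$, and $F(\Omega_1)=\Omega_2$. Then $F_j^{-1}\to F^{-1}$ pointwise in $\Omega_2$, where $F_j^{-1},F^{-1}:\Omega_2\to\Omega_1$ denote the inverses of $F_j|_{\Omega_1}$ and $F|_{\Omega_1}$.
   Context: $\mathrm{Lip}(G,\Omega_1)$ denotes the Lipschitz constant of $G$ on $\Omega_1$. *)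

theory Defs
  imports "HOL-Analysis.Analysis"
begin

end

theory Submission
  imports Defs "HOL-Homology.Invariance_of_Domain" "HOL-Library.Infinite_Set"
begin

lemma boundary_bound:
  fixes h :: "'a::euclidean_space \<Rightarrow> 'a"
  assumes "open S" "L-lipschitz_on S h" "inj_on h S" "h ` S = T"
    and "cball y d \<subseteq> T" "d > 0" "z \<in> closure S" "z \<notin> S" "x' \<in> S" "h x' = y"
  shows "d \<le> L * dist x' z"
proof (rule ccontr)
  assume nd: "\<not> d \<le> L * dist x' z"
  have L0: "0 \<le> L" using lipschitz_on_nonneg[OF assms(2)] .
  have ch: "continuous_on S h" using lipschitz_on_continuous_on[OF assms(2)] .
  have cg: "continuous_on (h ` S) (inv_into S h)"
    by (rule continuous_on_inverse_open[OF assms(1) ch]) (auto simp: inv_into_f_f[OF assms(3)])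
  define K where "K = inv_into S h ` cball y d"
  have "compact K" unfolding K_def
    by (rule compact_continuous_image[OF continuous_on_subset[OF cg]]) (use assms in auto)
  then have "closed K" by (rule compact_imp_closed)
  have KS: "K \<subseteq> S" unfolding K_def using assms(4,5) by (auto intro: inv_into_into)
  then have "z \<notin> K" using assms(8) by auto
  moreover have "open (- K)" using \<open>closed K\<close> by (simp add: open_Compl)
  ultimately obtain r where r0: "r > 0" "ball z r \<subseteq> - K"
    using open_contains_ball by blast
  then have r: "r > 0" "ball z r \<inter> K = {}" by auto
  define m where "m = min r ((d - L * dist x' z) / (L + 1))"
  have m: "m > 0" using r nd L0 by (auto simp: m_def)
  obtain p where p: "p \<in> S" "dist p z < m"
    using assms(7) m by (meson closure_approachable)
  have "dist (h p) y \<le> L * dist p x'"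
    using lipschitz_onD[OF assms(2) p(1) assms(9)] assms(10) by simp
  also have "\<dots> \<le> L * (dist p z + dist x' z)"
    using L0 by (intro mult_left_mono) (auto simp: dist_triangle dist_commute intro: dist_triangle2)
  also have "\<dots> \<le> d"
  proof -
    have "dist p z \<le> (d - L * dist x' z) / (L + 1)" using p m_def by simp
    then have "(L+1) * dist p z \<le> d - L * dist x' z" using L0 by (simp add: field_simps)
    then have "dist p z + (L * dist p z + L * dist x' z) \<le> d" by (simp add: algebra_simps)
    then have "L * dist p z + L * dist x' z \<le> d" using zero_le_dist[of p z] by linarith
    then show ?thesis by (simp add: distrib_left)
  qed
  finally have "h p \<in> cball y d" by (simp add: dist_commute)
  then have "inv_into S h (h p) \<in> K" unfolding K_def by blast
  then have "p \<in> K" using inv_into_f_f[OF assms(3) p(1)] by simp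
  moreover have "p \<in> ball z r" using p m_def by (simp add: dist_commute)
  ultimately show False using r by blast
qed

theorem lemma3p2:
  fixes \<Omega>1 \<Omega>2 :: "'a::euclidean_space set"
    and Fs :: "nat \<Rightarrow> 'a \<Rightarrow> 'a" and F :: "'a \<Rightarrow> 'a"
  assumes "open \<Omega>1" "bounded \<Omega>1" "open \<Omega>2" "bounded \<Omega>2"
    and "\<And>j. Fs j ` closure \<Omega>1 \<subseteq> closure \<Omega>2"
    and "F ` closure \<Omega>1 \<subseteq> closure \<Omega>2"
    and "\<exists>L. \<forall>j. L-lipschitz_on \<Omega>1 (Fs j)"
    and "inj_on F \<Omega>1" "\<And>j. inj_on (Fs j) \<Omega>1"
    and "\<And>x. x \<in> \<Omega>1 \<Longrightarrow> (\<lambda>j. Fs j x) \<longlonglongrightarrow> F x"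
    and "\<And>j. Fs j ` frontier \<Omega>1 \<subseteq> frontier \<Omega>2"
    and "\<And>j. Fs j ` \<Omega>1 = \<Omega>2"
    and "F ` \<Omega>1 = \<Omega>2"
  shows "\<forall>y\<in>\<Omega>2. (\<lambda>j. inv_into \<Omega>1 (Fs j) y) \<longlonglongrightarrow> inv_into \<Omega>1 F y"
proof
  fix y assume y: "y \<in> \<Omega>2"
  obtain L where L: "\<And>j. L-lipschitz_on \<Omega>1 (Fs j)" using assms(7) by blast
  define xs where "xs = (\<lambda>j. inv_into \<Omega>1 (Fs j) y)"
  define x where "x = inv_into \<Omega>1 F y"
  have xs1: "xs j \<in> \<Omega>1" for j unfolding xs_def by (rule inv_into_into) (use y assms(12) in blast)
  have xs2: "Fs j (xs j) = y" for j unfolding xs_def by (rule f_inv_into_f) (use y assms(12) in blast)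
  have x1: "x \<in> \<Omega>1" unfolding x_def by (rule inv_into_into) (use y assms(13) in blast)
  have x2: "F x = y" unfolding x_def by (rule f_inv_into_f) (use y assms(13) in blast)
  obtain d where d: "d > 0" "cball y d \<subseteq> \<Omega>2"
    using assms(3) y open_contains_cball by blast
  show "xs \<longlonglongrightarrow> x"
  proof (rule ccontr)
    assume "\<not> xs \<longlonglongrightarrow> x"
    then obtain e where e: "e > 0" "\<forall>N. \<exists>j\<ge>N. \<not> dist (xs j) x < e"
      unfolding lim_sequentially by blast
    define S where "S = {j. e \<le> dist (xs j) x}"
    have "infinite S" unfolding S_def infinite_nat_iff_unbounded_le using e(2) by (auto simp: not_less)
    define r where "r = enumerate S"
    have r: "strict_mono r" unfolding r_def strict_mono_def
      using enumerate_mono \<open>infinite S\<close> by blast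
    have rS: "e \<le> dist (xs (r k)) x" for k
      using enumerate_in_set[OF \<open>infinite S\<close>] unfolding r_def S_def by blast
    have "compact (closure \<Omega>1)" using assms(2) by (simp add: compact_closure)
    moreover have "\<forall>k. (xs \<circ> r) k \<in> closure \<Omega>1" using xs1 closure_subset by auto
    ultimately obtain l r2 where l: "l \<in> closure \<Omega>1" "strict_mono r2" "(xs \<circ> r \<circ> r2) \<longlonglongrightarrow> l"
      using seq_compactE[of "closure \<Omega>1" "xs \<circ> r"] compact_imp_seq_compact by blast
    define s where "s = r \<circ> r2"
    have s: "strict_mono s" unfolding s_def using r l(2) by (simp add: strict_mono_o)
    have xl: "(\<lambda>k. xs (s k)) \<longlonglongrightarrow> l" using l(3) unfolding s_def by (simp add: o_def)
    have dl: "(\<lambda>k. dist (xs (s k)) l) \<longlonglongrightarrow> 0" by (rule tendsto_dist_iff[THEN iffD1, OF xl])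
    have "e \<le> dist l x"
    proof (rule tendsto_le[OF trivial_limit_sequentially])
      show "(\<lambda>k. dist (xs (s k)) x) \<longlonglongrightarrow> dist l x" by (rule tendsto_dist[OF xl tendsto_const])
      show "\<forall>\<^sub>F k in sequentially. e \<le> dist (xs (s k)) x" using rS unfolding s_def by simp
    qed simp
    show False
    proof (cases "l \<in> \<Omega>1")
      case True
      have "(\<lambda>k. dist (Fs (s k) l) y) \<longlonglongrightarrow> 0"
      proof (rule tendsto_sandwich[of "\<lambda>_. 0" _ _ "\<lambda>k. L * dist (xs (s k)) l"])
        show "\<forall>\<^sub>F k in sequentially. 0 \<le> dist (Fs (s k) l) y" by simp
        show "\<forall>\<^sub>F k in sequentially. dist (Fs (s k) l) y \<le> L * dist (xs (s k)) l"
        proof (rule always_eventually, rule allI)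
          fix k
          have "dist (Fs (s k) l) (Fs (s k) (xs (s k))) \<le> L * dist l (xs (s k))"
            by (rule lipschitz_onD[OF L True xs1])
          then show "dist (Fs (s k) l) y \<le> L * dist (xs (s k)) l"
            using xs2[of "s k"] by (simp add: dist_commute)
        qed
        show "(\<lambda>k. L * dist (xs (s k)) l) \<longlonglongrightarrow> 0"
          using tendsto_mult_right_zero[OF dl] by simp
      qed simp
      then have "(\<lambda>k. Fs (s k) l) \<longlonglongrightarrow> y" by (rule tendsto_dist_iff[THEN iffD2])
      moreover have "(\<lambda>k. Fs (s k) l) \<longlonglongrightarrow> F l"
        using LIMSEQ_subseq_LIMSEQ[OF assms(10)[OF True] s] by (simp add: o_def)
      ultimately have "F l = y" using LIMSEQ_unique by blast
      then have "l = x" using assms(8) True x1 x2 by (auto dest: inj_onD)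
      then show False using \<open>e \<le> dist l x\<close> e(1) by simp
    next
      case False
      have b: "d \<le> L * dist (xs (s k)) l" for k
        by (rule boundary_bound[OF assms(1) L assms(9) assms(12) d(2) d(1) l(1) False xs1 xs2])
      have "(\<lambda>k. L * dist (xs (s k)) l) \<longlonglongrightarrow> 0"
        using tendsto_mult_right_zero[OF dl] by simp
      then have "d \<le> 0"
        by (rule tendsto_lowerbound) (use b in auto)
      then show False using d(1) by simp
    qed
  qed
qed

end
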